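(* Assume $\ell=2$. An observed law $\mathcal P$ of $(Y,D,Z)$ with $\mathcal P(Z=0),\mathcal P(Z=1)>0$ is induced by some full data law satisfying exclusion, random assignment and consistency if and only if $$\sum_{k\in[n]}-p_{k0,1}+\sum_{k\in T}(p_{k1,0}-p_{k1,1})\le 0\quad\text{for all nonempty }T\subseteq\{0,\dots,n-2\},$$ $$\sum_{k\in[n]}-p_{k1,0}+\sum_{k\in T}(p_{k0,1}-p_{k0,0})\le 0\quad\text{for all nonempty }T\subsetneq[n],$$ $$\sum_{k\in[n]}-p_{k0,0}+\sum_{k\in T}(p_{k1,1}-p_{k1,0})\le 0\quad\text{for all nonempty }T\subseteq\{0,\dots,n-2\}.$$
   Context: $D\in\{0,1\}$ treatment; $Y$ outcome with values $\gamma_0<\dots<\gamma_{n-1}$; instrument $Z\in\{0,1\}$; $[n]=\{0,\dots,n-1\}$. Potential outcomes $Y^{(d,z)}$, potential treatments $D^{(z)}$. Exclusion: $Y^{(d,0)}=Y^{(d,1)}$ a.s., written $Y^{(d)}$. Random assignment: $Z\perp(Y^{(0)},Y^{(1)},D^{(0)},D^{(1)})$. Consistency: $Y=(1-D)Y^{(0)}+DY^{(1)}$, $D=\mathbb 1(Z=0)D^{(0)}+\mathbb 1(Z=1)D^{(1)}$. A full data law is a joint law of $(Y^{(0)},Y^{(1)},D^{(0)},D^{(1)},Z)$, inducing the observed law of $(Y,D,Z)$. $p_{yd,z}=\mathcal P(Y=\gamma_y,D=d\mid Z=z)$. *)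

theory Defs
  imports "HOL-Probability.Probability"
begin

(* Outcome values gamma_0 < ... < gamma_{n-1} are represented by their indices k in {..<n}.
   Treatment D and instrument Z are booleans (True = 1, False = 0).

   Full data: ((Y0, Y1, D0, D1), Z), i.e. the joint law of (Y^(0),Y^(1),D^(0),D^(1),Z);
   exclusion is built in by using the potential outcomes Y^(d) directly.
   Observed data: (Y, D, Z). *)

type_synonym full_data = "(nat \<times> nat \<times> bool \<times> bool) \<times> bool"
type_synonym obs_data = "nat \<times> bool \<times> bool"

(* consistency: D = D^(Z), Y = (1-D) Y^(0) + D Y^(1) *)
definition obs :: "full_data \<Rightarrow> obs_data" where
  "obs \<omega> = (let (u, z) = \<omega>; (y0, y1, d0, d1) = u;
              d = (if z then d1 else d0) in ((if d then y1 else y0), d, z))"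

definition random_assignment :: "full_data pmf \<Rightarrow> bool" where
  "random_assignment F \<longleftrightarrow>
     (\<forall>A B. measure_pmf.prob F {\<omega>. fst \<omega> \<in> A \<and> snd \<omega> \<in> B}
            = measure_pmf.prob F {\<omega>. fst \<omega> \<in> A} * measure_pmf.prob F {\<omega>. snd \<omega> \<in> B})"

definition outcomes_in :: "nat \<Rightarrow> full_data pmf \<Rightarrow> bool" where
  "outcomes_in n F \<longleftrightarrow> (\<forall>\<omega>\<in>set_pmf F. fst (fst \<omega>) < n \<and> fst (snd (fst \<omega>)) < n)"

definition induced_by :: "nat \<Rightarrow> full_data pmf \<Rightarrow> obs_data pmf \<Rightarrow> bool" where
  "induced_by n F Q \<longleftrightarrow> outcomes_in n F \<and> random_assignment F \<and> map_pmf obs F = Q"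

definition pcond :: "obs_data pmf \<Rightarrow> nat \<Rightarrow> bool \<Rightarrow> bool \<Rightarrow> real" where
  "pcond Q k d z = measure_pmf.prob Q {(k, d, z)} / measure_pmf.prob Q {w. snd (snd w) = z}"

end

theory Submission
  imports Defs
begin


definition AA :: "nat \<Rightarrow> bool \<Rightarrow> bool \<Rightarrow> (nat \<times> nat \<times> bool \<times> bool) set" where
  "AA k d z = {(y0, y1, d0, d1). (if z then d1 else d0) = d \<and> (if d then y1 else y0) = k}"

lemma box_sum1: "(\<Sum>u\<in>{..<n} \<times> {..<n} \<times> (UNIV::bool set) \<times> (UNIV::bool set). g u) =
   (\<Sum>y1<n. \<Sum>d0\<in>UNIV. \<Sum>d1\<in>UNIV. \<Sum>y0<n. g (y0, y1, d0, d1))"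
proof -
  have "(\<Sum>y1<n. \<Sum>d0\<in>UNIV. \<Sum>d1\<in>UNIV. \<Sum>y0<n. g (y0, y1, d0, d1)) =
     (\<Sum>(y1, d0, d1, y0)\<in>{..<n} \<times> (UNIV::bool set) \<times> (UNIV::bool set) \<times> {..<n}. g (y0, y1, d0, d1))"
    by (simp add: sum.cartesian_product')
  also have "\<dots> = (\<Sum>u\<in>{..<n} \<times> {..<n} \<times> (UNIV::bool set) \<times> (UNIV::bool set). g u)"
    by (rule sum.reindex_bij_witness[of _ "\<lambda>(y0, y1, d0, d1). (y1, d0, d1, y0)" "\<lambda>(y1, d0, d1, y0). (y0, y1, d0, d1)"]) auto
  finally show ?thesis by simp
qed

lemma box_sum0: "(\<Sum>u\<in>{..<n} \<times> {..<n} \<times> (UNIV::bool set) \<times> (UNIV::bool set). g u) =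
   (\<Sum>y0<n. \<Sum>d0\<in>UNIV. \<Sum>d1\<in>UNIV. \<Sum>y1<n. g (y0, y1, d0, d1))"
proof -
  have "(\<Sum>y0<n. \<Sum>d0\<in>UNIV. \<Sum>d1\<in>UNIV. \<Sum>y1<n. g (y0, y1, d0, d1)) =
     (\<Sum>(y0, d0, d1, y1)\<in>{..<n} \<times> (UNIV::bool set) \<times> (UNIV::bool set) \<times> {..<n}. g (y0, y1, d0, d1))"
    by (simp add: sum.cartesian_product')
  also have "\<dots> = (\<Sum>u\<in>{..<n} \<times> {..<n} \<times> (UNIV::bool set) \<times> (UNIV::bool set). g u)"
    by (rule sum.reindex_bij_witness[of _ "\<lambda>(y0, y1, d0, d1). (y0, d0, d1, y1)" "\<lambda>(y0, d0, d1, y1). (y0, y1, d0, d1)"]) auto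
  finally show ?thesis by simp
qed

context
  fixes n :: nat and q :: "bool \<Rightarrow> nat \<Rightarrow> bool \<Rightarrow> real"
begin

definition "al = (\<Sum>k<n. q False k True)"
definition "be = (\<Sum>k<n. q True k True)"
definition "m1 k = min (q False k True) (q True k True)"
definition "m0 k = min (q False k False) (q True k False)"
definition "S1 = (\<Sum>k<n. m1 k)"
definition "S0 = (\<Sum>k<n. m0 k)"
definition "ss = max 0 (al + be - 1)"
definition "p00 = 1 - al - be + ss"
definition "ppi d0 d1 = (if d0 then (if d1 then ss else al - ss) else (if d1 then be - ss else p00))"
definition "H1 d0 d1 k = (if k < n then (if d0 then (if d1 then m1 k * ss / S1 else q False k True - m1 k * ss / S1)
   else (if d1 then q True k True - m1 k * ss / S1 else (if k = 0 then p00 else 0))) else 0)"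
definition "H0 d0 d1 k = (if k < n then (if d0 then (if d1 then (if k = 0 then ss else 0) else q True k False - m0 k * p00 / S0)
   else (if d1 then q False k False - m0 k * p00 / S0 else m0 k * p00 / S0)) else 0)"
definition "ww u = (case u of (y0, y1, d0, d1) \<Rightarrow> H1 d0 d1 y1 * H0 d0 d1 y0 / ppi d0 d1)"

context
  assumes npos: "0 < n" and qnn: "\<And>z k d. 0 \<le> q z k d"
    and qsum: "\<And>z. (\<Sum>k<n. q z k True) + (\<Sum>k<n. q z k False) = 1"
    and P1: "(\<Sum>k<n. max (q False k True) (q True k True)) \<le> 1"
    and P0: "(\<Sum>k<n. max (q False k False) (q True k False)) \<le> 1"
begin

lemma c_sum: "(\<Sum>k<n. q False k False) = 1 - al" "(\<Sum>k<n. q True k False) = 1 - be"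
  using qsum[of False] qsum[of True] by (auto simp: al_def be_def)

lemma al_le: "0 \<le> al" "al \<le> 1" "0 \<le> be" "be \<le> 1"
proof -
  have "0 \<le> (\<Sum>k<n. q z k d)" for z d by (intro sum_nonneg qnn)
  from this[of False False] this[of True False] this[of False True] this[of True True]
  show "0 \<le> al" "al \<le> 1" "0 \<le> be" "be \<le> 1" using c_sum
    by (auto simp: al_def be_def)
qed

lemma S1_props: "0 \<le> S1" "S1 \<le> al" "S1 \<le> be" "al + be - 1 \<le> S1"
proof -
  have "(\<Sum>k<n. max (q False k True) (q True k True)) + S1 = al + be"
    unfolding S1_def al_def be_def m1_def sum.distrib[symmetric]
    by (intro sum.cong) auto
  moreover have "S1 \<le> al" unfolding S1_def al_def m1_def by (intro sum_mono) auto
  moreover have "S1 \<le> be" unfolding S1_def be_def m1_def by (intro sum_mono) auto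
  moreover have "0 \<le> S1" unfolding S1_def m1_def by (intro sum_nonneg) (auto simp: qnn)
  ultimately show "0 \<le> S1" "S1 \<le> al" "S1 \<le> be" "al + be - 1 \<le> S1" using P1 by auto
qed

lemma S0_props: "0 \<le> S0" "S0 \<le> 1 - al" "S0 \<le> 1 - be" "1 - al - be \<le> S0"
proof -
  have "(\<Sum>k<n. max (q False k False) (q True k False)) + S0 = (1 - al) + (1 - be)"
    unfolding S0_def c_sum[symmetric] m0_def sum.distrib[symmetric]
    by (intro sum.cong) auto
  moreover have "S0 \<le> 1 - al" unfolding S0_def c_sum[symmetric] m0_def by (intro sum_mono) auto
  moreover have "S0 \<le> 1 - be" unfolding S0_def c_sum[symmetric] m0_def by (intro sum_mono) auto
  moreover have "0 \<le> S0" unfolding S0_def m0_def by (intro sum_nonneg) (auto simp: qnn)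
  ultimately show "0 \<le> S0" "S0 \<le> 1 - al" "S0 \<le> 1 - be" "1 - al - be \<le> S0" using P0 by auto
qed

lemma ss_props: "0 \<le> ss" "ss \<le> S1" "0 \<le> p00" "p00 \<le> S0"
  using S1_props S0_props by (auto simp: ss_def p00_def)

lemma scale_le: fixes x S m :: real assumes "0 \<le> x" "x \<le> S" "0 \<le> m"
  shows "0 \<le> m * x / S" "m * x / S \<le> m"
proof -
  show "0 \<le> m * x / S" using assms by (simp add: divide_nonneg_nonneg)
  show "m * x / S \<le> m"
  proof (cases "S = 0")
    case True then show ?thesis using assms by simp
  next
    case False then have "S > 0" using assms by simp
    then show ?thesis using assms by (simp add: divide_le_eq mult_left_mono)
  qed
qed

lemma scale_sum: fixes x S :: real and m :: "nat \<Rightarrow> real" assumes "(\<Sum>k<n. m k) = S" "0 \<le> x" "x \<le> S" 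
  shows "(\<Sum>k<n. m k * x / S) = x"
proof (cases "S = 0")
  case True then have "x = 0" using assms by simp
  then show ?thesis by simp
next
  case False
  have "(\<Sum>k<n. m k * x / S) = (\<Sum>k<n. m k) * x / S"
    by (simp add: sum_divide_distrib sum_distrib_right)
  then show ?thesis using assms False by simp
qed

lemma H1_nn: "0 \<le> H1 d0 d1 k"
proof -
  have m: "0 \<le> m1 k" "m1 k \<le> q False k True" "m1 k \<le> q True k True" by (auto simp: m1_def qnn)
  show ?thesis using scale_le[OF ss_props(1,2) m(1)] m ss_props unfolding H1_def by auto
qed

lemma H0_nn: "0 \<le> H0 d0 d1 k"
proof -
  have m: "0 \<le> m0 k" "m0 k \<le> q False k False" "m0 k \<le> q True k False" by (auto simp: m0_def qnn)
  show ?thesis using scale_le[OF ss_props(3,4) m(1)] m ss_props unfolding H0_def by auto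
qed

lemma sum_if0: "(\<Sum>k<n. (if k = 0 then x else 0)) = (x::real)"
  using npos by (simp add: sum.delta)

lemma H1_sum: "(\<Sum>k<n. H1 d0 d1 k) = ppi d0 d1"
proof -
  have s: "(\<Sum>k<n. m1 k * ss / S1) = ss" by (rule scale_sum[OF _ ss_props(1) ss_props(2)]) (simp add: S1_def)
  show ?thesis unfolding H1_def ppi_def
    by (cases d0; cases d1) (simp_all add: s sum_subtractf al_def be_def sum_if0)
qed

lemma H0_sum: "(\<Sum>k<n. H0 d0 d1 k) = ppi d0 d1"
proof -
  have s: "(\<Sum>k<n. m0 k * p00 / S0) = p00" by (rule scale_sum[OF _ ss_props(3) ss_props(4)]) (simp add: S0_def)
  show ?thesis unfolding H0_def ppi_def
    by (cases d0; cases d1) (simp_all add: s sum_subtractf c_sum sum_if0, simp_all add: p00_def)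
qed

lemma ppi_nn: "0 \<le> ppi d0 d1"
  using H1_sum[of d0 d1] by (metis H1_nn sum_nonneg)

lemma ppi0: "ppi d0 d1 = 0 \<Longrightarrow> k < n \<Longrightarrow> H1 d0 d1 k = 0 \<and> H0 d0 d1 k = 0"
  using H1_sum[of d0 d1] H0_sum[of d0 d1] H1_nn H0_nn
  by (metis finite_lessThan lessThan_iff sum_nonneg_eq_0_iff)

lemma ww_nn: "0 \<le> ww u"
  by (auto simp: ww_def H1_nn H0_nn ppi_nn split: prod.splits)

lemma marg1: "(\<Sum>y0<n. ww (y0, y1, d0, d1)) = H1 d0 d1 y1"
proof (cases "ppi d0 d1 = 0")
  case True
  then show ?thesis by (simp add: ww_def)
     (metis H1_def True ppi0)
next
  case False
  have "(\<Sum>y0<n. ww (y0, y1, d0, d1)) = H1 d0 d1 y1 * (\<Sum>y0<n. H0 d0 d1 y0) / ppi d0 d1"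
    by (simp add: ww_def sum_divide_distrib sum_distrib_left)
  then show ?thesis using False by (simp add: H0_sum)
qed

lemma marg0: "(\<Sum>y1<n. ww (y0, y1, d0, d1)) = H0 d0 d1 y0"
proof (cases "ppi d0 d1 = 0")
  case True
  then show ?thesis by (simp add: ww_def)
     (metis H0_def True ppi0)
next
  case False
  have "(\<Sum>y1<n. ww (y0, y1, d0, d1)) = H0 d0 d1 y0 * (\<Sum>y1<n. H1 d0 d1 y1) / ppi d0 d1"
    by (simp add: ww_def sum_divide_distrib sum_distrib_left sum_distrib_right mult.commute)
  then show ?thesis using False by (simp add: H1_sum)
qed

lemma margA1: "(\<Sum>u\<in>{..<n} \<times> {..<n} \<times> (UNIV::bool set) \<times> (UNIV::bool set).
     if u \<in> AA k True z then ww u else 0) = (if k < n then q z k True else 0)"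
proof -
  have inner: "(\<Sum>y0<n. if (y0,y1,d0,d1) \<in> AA k True z then ww (y0,y1,d0,d1) else 0)
     = (if (if z then d1 else d0) \<and> y1 = k then H1 d0 d1 y1 else 0)" for y1 d0 d1
  proof (cases "(if z then d1 else d0) \<and> y1 = k")
    case True
    then have "\<And>y0. (y0,y1,d0,d1) \<in> AA k True z" by (auto simp: AA_def)
    then show ?thesis using True by (simp add: marg1)
  next
    case False
    then have "\<And>y0. (y0,y1,d0,d1) \<notin> AA k True z" by (auto simp: AA_def)
    then show ?thesis using False by (auto split: if_splits)
  qed
  show ?thesis unfolding box_sum1 inner
    by (simp add: UNIV_bool sum.distrib sum.delta H1_def m1_def)
qed

lemma margA0: "(\<Sum>u\<in>{..<n} \<times> {..<n} \<times> (UNIV::bool set) \<times> (UNIV::bool set).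
     if u \<in> AA k False z then ww u else 0) = (if k < n then q z k False else 0)"
proof -
  have inner: "(\<Sum>y1<n. if (y0,y1,d0,d1) \<in> AA k False z then ww (y0,y1,d0,d1) else 0)
     = (if \<not> (if z then d1 else d0) \<and> y0 = k then H0 d0 d1 y0 else 0)" for y0 d0 d1
  proof (cases "\<not> (if z then d1 else d0) \<and> y0 = k")
    case True
    then have "\<And>y1. (y0,y1,d0,d1) \<in> AA k False z" by (auto simp: AA_def)
    then show ?thesis using True by (simp add: marg0)
  next
    case False
    then have "\<And>y1. (y0,y1,d0,d1) \<notin> AA k False z" by (auto simp: AA_def)
    then show ?thesis using False by (auto split: if_splits)
  qed
  show ?thesis unfolding box_sum0 inner
    by (simp add: UNIV_bool sum.distrib sum.delta H0_def m0_def)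
qed

lemma ww_total: "(\<Sum>u\<in>{..<n} \<times> {..<n} \<times> (UNIV::bool set) \<times> (UNIV::bool set). ww u) = 1"
proof -
  show ?thesis unfolding box_sum1 sum_distrib_right[symmetric] marg1
    by (simp add: UNIV_bool sum.distrib H1_sum ppi_def p00_def)
qed

lemma ww_out: "u \<notin> {..<n} \<times> {..<n} \<times> (UNIV::bool set) \<times> (UNIV::bool set) \<Longrightarrow> ww u = 0"
  by (auto simp: ww_def H1_def H0_def split: prod.splits)

end
end

lemma meas_sum:
  assumes "finite B" "set_pmf M \<subseteq> B"
  shows "measure_pmf.prob M S = (\<Sum>x\<in>B. pmf M x * indicator S x)"
proof -
  have "measure_pmf.prob M S = (\<integral>x. indicator S x \<partial>measure_pmf M)" by simp
  also have "\<dots> = (\<Sum>x\<in>B. indicator S x * pmf M x)"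
    by (rule integral_measure_pmf_real) (use assms in auto)
  finally show ?thesis by (simp add: mult.commute)
qed

lemma sumI:
  assumes "finite K"
  shows "(\<Sum>k\<in>K. indicator (AA k d z) (y0, y1, d0, d1) :: real) =
    (if (if z then d1 else d0) = d \<and> (if d then y1 else y0) \<in> K then 1 else 0)"
proof -
  have "(\<Sum>k\<in>K. indicator (AA k d z) (y0, y1, d0, d1) :: real) =
     (\<Sum>k\<in>K. if (if z then d1 else d0) = d then (if (if d then y1 else y0) = k then 1 else 0) else 0)"
    by (intro sum.cong) (auto simp: AA_def indicator_def)
  then show ?thesis using assms by (cases "(if z then d1 else d0) = d") (auto simp: sum.delta)
qed

lemma pearl1:
  fixes q :: "bool \<Rightarrow> nat \<Rightarrow> bool \<Rightarrow> real"
  assumes npos: "0 < n" and qnn: "\<And>z k d. 0 \<le> q z k d"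
    and qsum: "\<And>z. (\<Sum>k<n. q z k True) + (\<Sum>k<n. q z k False) = 1"
    and h1: "\<forall>T. T \<noteq> {} \<and> T \<subseteq> {k. k + 1 < n} \<longrightarrow>
        (\<Sum>k<n. - q True k False) + (\<Sum>k\<in>T. q False k True - q True k True) \<le> 0"
    and h3: "\<forall>T. T \<noteq> {} \<and> T \<subseteq> {k. k + 1 < n} \<longrightarrow>
        (\<Sum>k<n. - q False k False) + (\<Sum>k\<in>T. q True k True - q False k True) \<le> 0"
  shows "(\<Sum>k<n. max (q False k True) (q True k True)) \<le> 1"
proof -
  define Ts where "Ts = {k. k < n \<and> q True k True < q False k True}"
  have fin: "finite Ts" "Ts \<subseteq> {..<n}" by (auto simp: Ts_def)
  have "(\<Sum>k<n. max (q False k True) (q True k True)) =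
      (\<Sum>k<n. q True k True + (if k \<in> Ts then q False k True - q True k True else 0))"
    by (intro sum.cong) (auto simp: Ts_def)
  also have "\<dots> = (\<Sum>k<n. q True k True) + (\<Sum>k\<in>Ts. q False k True - q True k True)"
    using fin by (simp add: sum.distrib sum.If_cases Int_absorb1)
  finally have eq: "(\<Sum>k<n. max (q False k True) (q True k True)) =
      (\<Sum>k<n. q True k True) + (\<Sum>k\<in>Ts. q False k True - q True k True)" .
  have nn: "0 \<le> (\<Sum>k<n. q z k d)" for z d by (intro sum_nonneg qnn)
  have key: "(\<Sum>k\<in>Ts. q False k True - q True k True) \<le> (\<Sum>k<n. q True k False)"
  proof (cases "Ts = {}")
    case True then show ?thesis using nn by simp
  next
    case ne: False
    show ?thesis
    proof (cases "Ts \<subseteq> {k. k + 1 < n}")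
      case True
      then show ?thesis using h1 ne by (auto simp: sum_negf)
    next
      case False
      show ?thesis
      proof (cases "Ts = {..<n}")
        case True
        then show ?thesis using qsum[of False] qsum[of True] nn[of False False]
          by (simp add: sum_subtractf)
      next
        case False
        define T' where "T' = {..<n} - Ts"
        have T'ne: "T' \<noteq> {}" using False fin by (auto simp: T'_def)
        obtain j where "j \<in> Ts" "\<not> j + 1 < n" using \<open>\<not> Ts \<subseteq> {k. k + 1 < n}\<close> by auto
        moreover then have "j < n" using fin by auto
        ultimately have "n - 1 \<in> Ts" proof -
          have "j = n - 1" using \<open>j < n\<close> \<open>\<not> j + 1 < n\<close> by linarith
          then show ?thesis using \<open>j \<in> Ts\<close> by simp
        qed
        then have T'sub: "T' \<subseteq> {k. k + 1 < n}" unfolding T'_def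
        proof (intro subsetI)
          fix x assume "x \<in> {..<n} - Ts" "n - 1 \<in> Ts"
          then have "x < n" "x \<noteq> n - 1" by auto
          then show "x \<in> {k. k + 1 < n}" by auto
        qed
        have "(\<Sum>k\<in>T'. q True k True - q False k True) \<le> (\<Sum>k<n. q False k False)"
          using h3 T'ne T'sub by (auto simp: sum_negf)
        moreover have "(\<Sum>k\<in>Ts. q False k True - q True k True) =
            (\<Sum>k<n. q False k True - q True k True) - (\<Sum>k\<in>T'. q False k True - q True k True)"
          unfolding T'_def using fin by (simp add: sum_diff Int_absorb1 sum_diff1)
        ultimately show ?thesis using qsum[of False] qsum[of True]
          by (simp add: sum_subtractf)
      qed
    qed
  qed
  show ?thesis using eq key qsum[of True] by simp
qed

lemma pearl0:
  fixes q :: "bool \<Rightarrow> nat \<Rightarrow> bool \<Rightarrow> real"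
  assumes npos: "0 < n" and qnn: "\<And>z k d. 0 \<le> q z k d"
    and qsum: "\<And>z. (\<Sum>k<n. q z k True) + (\<Sum>k<n. q z k False) = 1"
    and h2: "\<forall>T. T \<noteq> {} \<and> T \<subset> {..<n} \<longrightarrow>
        (\<Sum>k<n. - q False k True) + (\<Sum>k\<in>T. q True k False - q False k False) \<le> 0"
  shows "(\<Sum>k<n. max (q False k False) (q True k False)) \<le> 1"
proof -
  define Ts where "Ts = {k. k < n \<and> q False k False < q True k False}"
  have fin: "finite Ts" "Ts \<subseteq> {..<n}" by (auto simp: Ts_def)
  have "(\<Sum>k<n. max (q False k False) (q True k False)) =
      (\<Sum>k<n. q False k False + (if k \<in> Ts then q True k False - q False k False else 0))"
    by (intro sum.cong) (auto simp: Ts_def)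
  also have "\<dots> = (\<Sum>k<n. q False k False) + (\<Sum>k\<in>Ts. q True k False - q False k False)"
    using fin by (simp add: sum.distrib sum.If_cases Int_absorb1)
  finally have eq: "(\<Sum>k<n. max (q False k False) (q True k False)) =
      (\<Sum>k<n. q False k False) + (\<Sum>k\<in>Ts. q True k False - q False k False)" .
  have nn: "0 \<le> (\<Sum>k<n. q z k d)" for z d by (intro sum_nonneg qnn)
  have key: "(\<Sum>k\<in>Ts. q True k False - q False k False) \<le> (\<Sum>k<n. q False k True)"
  proof (cases "Ts = {}")
    case True then show ?thesis using nn by simp
  next
    case ne: False
    show ?thesis
    proof (cases "Ts = {..<n}")
      case True
      then show ?thesis using qsum[of False] qsum[of True] nn[of False False] nn[of True True]
        by (simp add: sum_subtractf)
    next
      case False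
      then have "Ts \<subset> {..<n}" using fin by auto
      then show ?thesis using h2 ne by (auto simp: sum_negf)
    qed
  qed
  show ?thesis using eq key qsum[of False] by simp
qed



lemma swapG: "(\<Sum>u\<in>B. p u * (\<Sum>k\<in>K. f k u)) = (\<Sum>k\<in>K. \<Sum>u\<in>B. p u * f k u :: real)"
  by (simp add: sum_distrib_left) (rule sum.swap)

lemma comb_eq:
  fixes G :: "nat \<Rightarrow> bool \<Rightarrow> bool \<Rightarrow> real"
  assumes G: "\<And>k d z. G k d z = (\<Sum>u\<in>B. p u * indicator (AA k d z) u)"
  shows "(\<Sum>k<n. - G k d z) + (\<Sum>k\<in>T. G k d' z' - G k d'' z'') =
    (\<Sum>u\<in>B. p u * (- (\<Sum>k<n. indicator (AA k d z) u) + (\<Sum>k\<in>T. indicator (AA k d' z') u)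
        - (\<Sum>k\<in>T. indicator (AA k d'' z'') u)))"
  unfolding G by (simp add: algebra_simps sum.distrib sum_subtractf sum_negf swapG)

lemma obs_pre: "obs -` {(k, d, z)} = {\<omega>. fst \<omega> \<in> AA k d z \<and> snd \<omega> \<in> {z}}"
  by (auto simp: obs_def AA_def split: if_splits prod.splits)

lemma obs_preZ: "obs -` {w. snd (snd w) = z} = {\<omega>. snd \<omega> = z}"
  by (auto simp: obs_def split: prod.splits)

lemma necessity:
  fixes Q :: "obs_data pmf"
  assumes ind: "induced_by n F Q"
    and Z0: "measure_pmf.prob Q {w. snd (snd w) = False} > 0"
    and Z1: "measure_pmf.prob Q {w. snd (snd w) = True} > 0"
  shows "((\<forall>T. T \<noteq> {} \<and> T \<subseteq> {k. k + 1 < n} \<longrightarrow>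
        (\<Sum>k<n. - pcond Q k False True)
        + (\<Sum>k\<in>T. pcond Q k True False - pcond Q k True True) \<le> 0)
   \<and> (\<forall>T. T \<noteq> {} \<and> T \<subset> {..<n} \<longrightarrow>
        (\<Sum>k<n. - pcond Q k True False)
        + (\<Sum>k\<in>T. pcond Q k False True - pcond Q k False False) \<le> 0)
   \<and> (\<forall>T. T \<noteq> {} \<and> T \<subseteq> {k. k + 1 < n} \<longrightarrow>
        (\<Sum>k<n. - pcond Q k False False)
        + (\<Sum>k\<in>T. pcond Q k True True - pcond Q k True False) \<le> 0))"
proof -
  have oi: "outcomes_in n F" and ra: "random_assignment F" and mp: "map_pmf obs F = Q"
    using ind by (auto simp: induced_by_def)
  define U where "U = map_pmf fst F"
  define B where "B = {..<n} \<times> {..<n} \<times> (UNIV::bool set) \<times> (UNIV::bool set)"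
  have finB: "finite B" by (simp add: B_def)
  have sU: "set_pmf U \<subseteq> B" using oi by (auto simp: U_def B_def outcomes_in_def)
  define G where "G k d z = measure_pmf.prob U (AA k d z)" for k d z
  have Gsum: "G k d z = (\<Sum>u\<in>B. pmf U u * indicator (AA k d z) u)" for k d z
    unfolding G_def by (rule meas_sum[OF finB sU])
  have Ppos: "measure_pmf.prob Q {w. snd (snd w) = z} > 0" for z
    using Z0 Z1 by (cases z) auto
  have pc: "pcond Q k d z = G k d z" for k d z
  proof -
    have "measure_pmf.prob Q {(k, d, z)} = measure_pmf.prob F {\<omega>. fst \<omega> \<in> AA k d z \<and> snd \<omega> \<in> {z}}"
      unfolding mp[symmetric] measure_map_pmf obs_pre ..
    also have "\<dots> = G k d z * measure_pmf.prob F {\<omega>. snd \<omega> \<in> {z}}"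
    proof -
      have a: "measure_pmf.prob F {\<omega>. fst \<omega> \<in> AA k d z \<and> snd \<omega> \<in> {z}} =
        measure_pmf.prob F {\<omega>. fst \<omega> \<in> AA k d z} * measure_pmf.prob F {\<omega>. snd \<omega> \<in> {z}}"
        using ra unfolding random_assignment_def by blast
      have b: "measure_pmf.prob F {\<omega>. fst \<omega> \<in> AA k d z} = G k d z"
        unfolding G_def U_def measure_map_pmf vimage_def by simp
      show ?thesis unfolding a b ..
    qed
    finally have 1: "measure_pmf.prob Q {(k, d, z)} = G k d z * measure_pmf.prob F {\<omega>. snd \<omega> \<in> {z}}" .
    have 2: "measure_pmf.prob Q {w. snd (snd w) = z} = measure_pmf.prob F {\<omega>. snd \<omega> \<in> {z}}"
      unfolding mp[symmetric] measure_map_pmf obs_preZ by simp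
    show ?thesis unfolding pcond_def 1 2 using Ppos[of z] 2 by simp
  qed
  have ptw: "0 \<le> pmf U u" for u by simp
  have key: "(\<Sum>k<n. - G k d z) + (\<Sum>k\<in>T. G k d' z' - G k d'' z'') \<le> 0"
    if fT: "finite T" and pt: "\<And>y0 y1 d0 d1. y0 < n \<Longrightarrow> y1 < n \<Longrightarrow>
       - (if (if z then d1 else d0) = d \<and> (if d then y1 else y0) \<in> {..<n} then 1 else 0)
       + (if (if z' then d1 else d0) = d' \<and> (if d' then y1 else y0) \<in> T then 1 else 0)
       - (if (if z'' then d1 else d0) = d'' \<and> (if d'' then y1 else y0) \<in> T then 1 else 0) \<le> (0::real)"
    for T d z d' z' d'' z''
  proof -
    have "(\<Sum>k<n. - G k d z) + (\<Sum>k\<in>T. G k d' z' - G k d'' z'') =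
    (\<Sum>u\<in>B. pmf U u * (- (\<Sum>k<n. indicator (AA k d z) u) + (\<Sum>k\<in>T. indicator (AA k d' z') u)
        - (\<Sum>k\<in>T. indicator (AA k d'' z'') u)))"
      by (rule comb_eq[OF Gsum])
    also have "\<dots> \<le> 0"
    proof (intro sum_nonpos mult_nonneg_nonpos ptw)
      fix u assume "u \<in> B"
      then obtain y0 y1 d0 d1 where u: "u = (y0, y1, d0, d1)" "y0 < n" "y1 < n" by (auto simp: B_def)
      show "- (\<Sum>k<n. indicator (AA k d z) u) + (\<Sum>k\<in>T. indicator (AA k d' z') u)
        - (\<Sum>k\<in>T. indicator (AA k d'' z'') u) \<le> (0::real)"
        unfolding u(1) sumI[OF fT] sumI[OF finite_lessThan] using pt[OF u(2,3)] .
    qed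
    finally show ?thesis .
  qed
  have finT: "finite T" if "T \<subseteq> {k. k + 1 < n}" for T
  proof (rule finite_subset[OF that])
    show "finite {k. k + 1 < n}" by (rule finite_subset[of _ "{..<n}"]) auto
  qed
  show ?thesis unfolding pc
  proof (intro conjI allI impI)
    fix T :: "nat set" assume "T \<noteq> {} \<and> T \<subseteq> {k. k + 1 < n}"
    then show "(\<Sum>k<n. - G k False True) + (\<Sum>k\<in>T. G k True False - G k True True) \<le> 0"
      by (intro key finT) (auto split: if_splits)
  next
    fix T :: "nat set" assume "T \<noteq> {} \<and> T \<subset> {..<n}"
    then have "finite T" by (meson finite_lessThan finite_subset psubset_imp_subset)
    then show "(\<Sum>k<n. - G k True False) + (\<Sum>k\<in>T. G k False True - G k False False) \<le> 0"
      by (intro key) (auto split: if_splits)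
  next
    fix T :: "nat set" assume "T \<noteq> {} \<and> T \<subseteq> {k. k + 1 < n}"
    then show "(\<Sum>k<n. - G k False False) + (\<Sum>k\<in>T. G k True True - G k True False) \<le> 0"
      by (intro key finT) (auto split: if_splits)
  qed
qed



lemma sufficiency:
  fixes n :: nat and Q :: "obs_data pmf"
  assumes supp: "set_pmf Q \<subseteq> {..<n} \<times> UNIV \<times> UNIV"
    and Z0: "measure_pmf.prob Q {w. snd (snd w) = False} > 0"
    and Z1: "measure_pmf.prob Q {w. snd (snd w) = True} > 0"
    and h1: "\<forall>T. T \<noteq> {} \<and> T \<subseteq> {k. k + 1 < n} \<longrightarrow>
        (\<Sum>k<n. - pcond Q k False True)
        + (\<Sum>k\<in>T. pcond Q k True False - pcond Q k True True) \<le> 0"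
    and h2: "\<forall>T. T \<noteq> {} \<and> T \<subset> {..<n} \<longrightarrow>
        (\<Sum>k<n. - pcond Q k True False)
        + (\<Sum>k\<in>T. pcond Q k False True - pcond Q k False False) \<le> 0"
    and h3: "\<forall>T. T \<noteq> {} \<and> T \<subseteq> {k. k + 1 < n} \<longrightarrow>
        (\<Sum>k<n. - pcond Q k False False)
        + (\<Sum>k\<in>T. pcond Q k True True - pcond Q k True False) \<le> 0"
  shows "\<exists>F. induced_by n F Q"
proof -
  define q where "q z k d = pcond Q k d z" for z k d
  define P where "P z = measure_pmf.prob Q {w. snd (snd w) = z}" for z
  have Ppos: "P z > 0" for z using Z0 Z1 by (cases z) (auto simp: P_def)
  obtain x where "x \<in> set_pmf Q" using set_pmf_not_empty[of Q] by blast
  then have npos: "0 < n" using supp by auto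
  have qnn: "0 \<le> q z k d" for z k d
    unfolding q_def pcond_def by (simp add: divide_nonneg_nonneg)
  have finQ: "finite ({..<n} \<times> (UNIV::bool set) \<times> (UNIV::bool set))" by simp
  have PQ: "P z = (\<Sum>k<n. pmf Q (k, True, z) + pmf Q (k, False, z))" for z
  proof -
    have "P z = (\<Sum>w\<in>{..<n} \<times> (UNIV::bool set) \<times> (UNIV::bool set). pmf Q w * indicator {w. snd (snd w) = z} w)"
      unfolding P_def by (rule meas_sum[OF finQ supp])
    also have "\<dots> = (\<Sum>k<n. pmf Q (k, True, z) + pmf Q (k, False, z))"
      unfolding sum.cartesian_product' by (cases z) (simp_all add: UNIV_bool indicator_def add.commute)
    finally show ?thesis .
  qed
  have qsum: "(\<Sum>k<n. q z k True) + (\<Sum>k<n. q z k False) = 1" for z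
  proof -
    have "(\<Sum>k<n. q z k True) + (\<Sum>k<n. q z k False) = (\<Sum>k<n. pmf Q (k, True, z) + pmf Q (k, False, z)) / P z"
      unfolding q_def pcond_def P_def[symmetric] measure_pmf_single
      by (simp add: sum_divide_distrib sum.distrib add_divide_distrib)
    then show ?thesis using Ppos[of z] PQ[of z] by simp
  qed
  have h1': "\<forall>T. T \<noteq> {} \<and> T \<subseteq> {k. k + 1 < n} \<longrightarrow>
        (\<Sum>k<n. - q True k False) + (\<Sum>k\<in>T. q False k True - q True k True) \<le> 0"
    using h1 by (simp add: q_def)
  have h3': "\<forall>T. T \<noteq> {} \<and> T \<subseteq> {k. k + 1 < n} \<longrightarrow>
        (\<Sum>k<n. - q False k False) + (\<Sum>k\<in>T. q True k True - q False k True) \<le> 0"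
    using h3 by (simp add: q_def)
  have h2': "\<forall>T. T \<noteq> {} \<and> T \<subset> {..<n} \<longrightarrow>
        (\<Sum>k<n. - q False k True) + (\<Sum>k\<in>T. q True k False - q False k False) \<le> 0"
    using h2 by (simp add: q_def)
  note P1 = pearl1[OF npos qnn qsum h1' h3']
  note P0 = pearl0[OF npos qnn qsum h2']
  define B where "B = {..<n} \<times> {..<n} \<times> (UNIV::bool set) \<times> (UNIV::bool set)"
  have finB: "finite B" by (simp add: B_def)
  define f where "f = ww n q"
  have fnn: "\<And>x. 0 \<le> f x" unfolding f_def by (rule ww_nn[OF npos qnn qsum P1 P0])
  have fout: "\<And>x. x \<notin> B \<Longrightarrow> f x = 0" unfolding f_def B_def by (rule ww_out[OF npos qnn qsum P1 P0])
  have ftot: "(\<Sum>x\<in>B. f x) = 1" unfolding f_def B_def by (rule ww_total[OF npos qnn qsum P1 P0])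
  have fint: "(\<integral>\<^sup>+x. ennreal (f x) \<partial>count_space UNIV) = 1"
  proof -
    have "(\<integral>\<^sup>+x. ennreal (f x) \<partial>count_space UNIV) = (\<Sum>x\<in>B. ennreal (f x))"
      by (rule nn_integral_count_space'[OF finB]) (auto simp: fout)
    also have "\<dots> = ennreal (\<Sum>x\<in>B. f x)" using fnn by simp
    finally show ?thesis using ftot by simp
  qed
  define U where "U = embed_pmf f"
  have pU: "pmf U x = f x" for x unfolding U_def by (rule pmf_embed_pmf[OF fnn fint])
  have sU: "set_pmf U \<subseteq> B" unfolding U_def set_embed_pmf[OF fnn fint] using fout by auto
  have mU: "measure_pmf.prob U (AA k d z) = (if k < n then q z k d else 0)" for k d z
  proof -
    have "measure_pmf.prob U (AA k d z) = (\<Sum>u\<in>B. pmf U u * indicator (AA k d z) u)"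
      by (rule meas_sum[OF finB sU])
    also have "\<dots> = (\<Sum>u\<in>B. if u \<in> AA k d z then f u else 0)"
      by (intro sum.cong) (auto simp: pU)
    also have "\<dots> = (if k < n then q z k d else 0)"
      unfolding f_def B_def
      by (cases d) (simp_all only: margA1[OF npos qnn qsum P1 P0] margA0[OF npos qnn qsum P1 P0])
    finally show ?thesis .
  qed
  define Zl where "Zl = map_pmf (\<lambda>w. snd (snd w)) Q"
  have mZ: "measure_pmf.prob Zl {z} = P z" for z
    unfolding Zl_def P_def measure_map_pmf by (simp add: vimage_def)
  define F where "F = pair_pmf U Zl"
  have oi: "outcomes_in n F" using sU by (auto simp: outcomes_in_def F_def B_def)
  have ra: "random_assignment F"
    unfolding random_assignment_def
  proof (intro allI)
    fix A :: "(nat \<times> nat \<times> bool \<times> bool) set" and C :: "bool set"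
    have e1: "{\<omega>. fst \<omega> \<in> A \<and> snd \<omega> \<in> C} = A \<times> C" by auto
    have e2: "{\<omega>::full_data. fst \<omega> \<in> A} = A \<times> UNIV" by auto
    have e3: "{\<omega>::full_data. snd \<omega> \<in> C} = UNIV \<times> C" by auto
    show "measure_pmf.prob F {\<omega>. fst \<omega> \<in> A \<and> snd \<omega> \<in> C} =
          measure_pmf.prob F {\<omega>. fst \<omega> \<in> A} * measure_pmf.prob F {\<omega>. snd \<omega> \<in> C}"
      unfolding e1 e2 e3 F_def
      by (simp add: measure_pmf_prob_product countableI_type)
  qed
  have mp: "map_pmf obs F = Q"
  proof (rule pmf_eqI)
    fix i :: obs_data
    obtain k d z where i: "i = (k, d, z)" by (cases i) auto
    have "pmf (map_pmf obs F) i = measure_pmf.prob F (AA k d z \<times> {z})"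
      unfolding pmf_map i obs_pre by (rule arg_cong[where f = "measure_pmf.prob F"]) auto
    also have "\<dots> = (if k < n then q z k d else 0) * P z"
      unfolding F_def by (simp add: measure_pmf_prob_product countableI_type mU mZ)
    also have "\<dots> = pmf Q i"
    proof (cases "k < n")
      case True
      then show ?thesis using Ppos[of z]
        by (simp add: q_def pcond_def P_def[symmetric] measure_pmf_single i)
    next
      case False
      then have "i \<notin> set_pmf Q" using supp i by auto
      then show ?thesis using False by (simp add: set_pmf_eq)
    qed
    finally show "pmf (map_pmf obs F) i = pmf Q i" .
  qed
  show ?thesis using oi ra mp unfolding induced_by_def by blast
qed


theorem theorem5:
  fixes n :: nat and Q :: "obs_data pmf"
  assumes supp: "set_pmf Q \<subseteq> {..<n} \<times> UNIV \<times> UNIV"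
    and Z0: "measure_pmf.prob Q {w. snd (snd w) = False} > 0"
    and Z1: "measure_pmf.prob Q {w. snd (snd w) = True} > 0"
  shows "(\<exists>F. induced_by n F Q) \<longleftrightarrow>
    ((\<forall>T. T \<noteq> {} \<and> T \<subseteq> {k. k + 1 < n} \<longrightarrow>
        (\<Sum>k<n. - pcond Q k False True)
        + (\<Sum>k\<in>T. pcond Q k True False - pcond Q k True True) \<le> 0)
   \<and> (\<forall>T. T \<noteq> {} \<and> T \<subset> {..<n} \<longrightarrow>
        (\<Sum>k<n. - pcond Q k True False)
        + (\<Sum>k\<in>T. pcond Q k False True - pcond Q k False False) \<le> 0)
   \<and> (\<forall>T. T \<noteq> {} \<and> T \<subseteq> {k. k + 1 < n} \<longrightarrow>
        (\<Sum>k<n. - pcond Q k False False)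
        + (\<Sum>k\<in>T. pcond Q k True True - pcond Q k True False) \<le> 0))"
proof
  assume "\<exists>F. induced_by n F Q"
  then obtain F where "induced_by n F Q" by blast
  then show "(\<forall>T. T \<noteq> {} \<and> T \<subseteq> {k. k + 1 < n} \<longrightarrow>
        (\<Sum>k<n. - pcond Q k False True)
        + (\<Sum>k\<in>T. pcond Q k True False - pcond Q k True True) \<le> 0)
   \<and> (\<forall>T. T \<noteq> {} \<and> T \<subset> {..<n} \<longrightarrow>
        (\<Sum>k<n. - pcond Q k True False)
        + (\<Sum>k\<in>T. pcond Q k False True - pcond Q k False False) \<le> 0)
   \<and> (\<forall>T. T \<noteq> {} \<and> T \<subseteq> {k. k + 1 < n} \<longrightarrow>
        (\<Sum>k<n. - pcond Q k False False)
        + (\<Sum>k\<in>T. pcond Q k True True - pcond Q k True False) \<le> 0)"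
    by (rule necessity[OF _ Z0 Z1])
next
  assume h: "(\<forall>T. T \<noteq> {} \<and> T \<subseteq> {k. k + 1 < n} \<longrightarrow>
        (\<Sum>k<n. - pcond Q k False True)
        + (\<Sum>k\<in>T. pcond Q k True False - pcond Q k True True) \<le> 0)
   \<and> (\<forall>T. T \<noteq> {} \<and> T \<subset> {..<n} \<longrightarrow>
        (\<Sum>k<n. - pcond Q k True False)
        + (\<Sum>k\<in>T. pcond Q k False True - pcond Q k False False) \<le> 0)
   \<and> (\<forall>T. T \<noteq> {} \<and> T \<subseteq> {k. k + 1 < n} \<longrightarrow>
        (\<Sum>k<n. - pcond Q k False False)
        + (\<Sum>k\<in>T. pcond Q k True True - pcond Q k True False) \<le> 0)"
  show "\<exists>F. induced_by n F Q"
    by (rule sufficiency[OF supp Z0 Z1 conjunct1[OF h] conjunct1[OF conjunct2[OF h]] conjunct2[OF conjunct2[OF h]]])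
qed

end
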